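(* Let $K\subset\mathbb{R}^d$ be compact, let $f:K\to\mathbb{R}$ be continuous and let $\varepsilon>0$. Then there exists a two-layer Morph-Net $N:\mathbb{R}^d\to\mathbb{R}$ (which may be taken to use dilation neurons only) such that $\sup_{{\bm{x}}\in K}|f({\bm{x}})-N({\bm{x}})|<\varepsilon$.
   Context: For ${\bm{x}}\in\mathbb{R}^p$ write ${\bm{x}}'=(x_1,\dots,x_p,0)\in\mathbb{R}^{p+1}$ (augmented input). For a structuring element ${\bm{s}}\in\mathbb{R}^{p+1}$, the dilation neuron computes ${\bm{x}}\oplus{\bm{s}}=\max_{1\le k\le p+1}(x'_k+s_k)$ and the erosion neuron computes ${\bm{x}}\ominus{\bm{s}}=\min_{1\le k\le p+1}(x'_k-s_k)$. A dilation-erosion layer applied to ${\bm{y}}\in\mathbb{R}^p$ consists of finitely many dilation and erosion neurons (each with its own structuring element in $\mathbb{R}^{p+1}$) all applied to ${\bm{y}}$, and outputs the vector of their values. A linear combination layer is an affine map ${\bm{z}}\mapsto A{\bm{z}}+{\bm{c}}$. A two-layer Morph-Net $N:\mathbb{R}^d\to\mathbb{R}$ is the composition: dilation-erosion layer on ${\bm{x}}\in\mathbb{R}^d$, then a linear combination layer, then a second dilation-erosion layer applied to the resulting vector, then a linear combination layer with a single real output. *)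

theory Defs
  imports "HOL-Analysis.Analysis" "HOL-Library.Extended_Real"
begin

text \<open>Vectors in R^p are functions on an index set I (I = UNIV for the input space
  real^'d, I = {..<p} for hidden layers, vectors as nat => real).  A structuring element
  in R^(p+1) is a pair (s, b): s gives the first p coordinates, b the last one, which is
  paired with the appended coordinate x'_(p+1) = 0 of the augmented input.\<close>

definition dilation :: "'i set \<Rightarrow> ('i \<Rightarrow> real) \<Rightarrow> ('i \<Rightarrow> real) \<times> real \<Rightarrow> real" where
  "dilation I x sb = Max (insert (0 + snd sb) ((\<lambda>k. x k + fst sb k) ` I))"

definition erosion :: "'i set \<Rightarrow> ('i \<Rightarrow> real) \<Rightarrow> ('i \<Rightarrow> real) \<times> real \<Rightarrow> real" where
  "erosion I x sb = Min (insert (0 - snd sb) ((\<lambda>k. x k - fst sb k) ` I))"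

definition de_neuron :: "'i set \<Rightarrow> ('i \<Rightarrow> real) \<Rightarrow> bool \<Rightarrow> ('i \<Rightarrow> real) \<times> real \<Rightarrow> real" where
  "de_neuron I x isdil sb = (if isdil then dilation I x sb else erosion I x sb)"

definition morphnet2 ::
  "nat \<Rightarrow> (nat \<Rightarrow> bool) \<Rightarrow> (nat \<Rightarrow> ('d \<Rightarrow> real) \<times> real)
   \<Rightarrow> nat \<Rightarrow> (nat \<Rightarrow> nat \<Rightarrow> real) \<Rightarrow> (nat \<Rightarrow> real)
   \<Rightarrow> nat \<Rightarrow> (nat \<Rightarrow> bool) \<Rightarrow> (nat \<Rightarrow> (nat \<Rightarrow> real) \<times> real)
   \<Rightarrow> (nat \<Rightarrow> real) \<Rightarrow> real \<Rightarrow> real ^ 'd \<Rightarrow> real" where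
  "morphnet2 m1 k1 S1 q A1 c1 m2 k2 S2 a2 c2 x =
     (let h1 = (\<lambda>j. de_neuron UNIV (\<lambda>i. x $ i) (k1 j) (S1 j));
          z  = (\<lambda>i. (\<Sum>j<m1. A1 i j * h1 j) + c1 i);
          h2 = (\<lambda>j. de_neuron {..<q} z (k2 j) (S2 j))
      in (\<Sum>j<m2. a2 j * h2 j) + c2)"

definition is_morphnet2 :: "(real ^ 'd \<Rightarrow> real) \<Rightarrow> bool" where
  "is_morphnet2 N \<longleftrightarrow> (\<exists>m1 k1 S1 q A1 c1 m2 k2 S2 a2 c2.
      N = morphnet2 m1 k1 S1 q A1 c1 m2 k2 S2 a2 c2)"

definition is_dilation_morphnet2 :: "(real ^ 'd \<Rightarrow> real) \<Rightarrow> bool" where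
  "is_dilation_morphnet2 N \<longleftrightarrow> (\<exists>m1 S1 q A1 c1 m2 S2 a2 c2.
      N = morphnet2 m1 (\<lambda>_. True) S1 q A1 c1 m2 (\<lambda>_. True) S2 a2 c2)"

end

theory Submission imports Defs begin

lemma finite_min_closed:
  assumes "finite T" "T \<noteq> {}" "\<forall>y\<in>T. G y \<in> L"
    and mn: "\<And>g h. g\<in>L \<Longrightarrow> h\<in>L \<Longrightarrow> (\<lambda>x. min (g x) (h x)) \<in> L"
  shows "(\<lambda>z. Min ((\<lambda>y. G y z) ` T)) \<in> L"
  using assms(1,2,3)
proof (induction T rule: finite_ne_induct)
  case (singleton y) then show ?case by simp
next
  case (insert a F)
  have "(\<lambda>z. Min ((\<lambda>y. G y z) ` insert a F)) = (\<lambda>z. min (G a z) (Min ((\<lambda>y. G y z) ` F)))"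
    using insert by auto
  then show ?case using insert mn by simp
qed

lemma finite_max_closed:
  assumes "finite T" "T \<noteq> {}" "\<forall>y\<in>T. G y \<in> L"
    and mx: "\<And>g h. g\<in>L \<Longrightarrow> h\<in>L \<Longrightarrow> (\<lambda>x. max (g x) (h x)) \<in> L"
  shows "(\<lambda>z. Max ((\<lambda>y. G y z) ` T)) \<in> L"
  using assms(1,2,3)
proof (induction T rule: finite_ne_induct)
  case (singleton y) then show ?case by simp
next
  case (insert a F)
  have "(\<lambda>z. Max ((\<lambda>y. G y z) ` insert a F)) = (\<lambda>z. max (G a z) (Max ((\<lambda>y. G y z) ` F)))"
    using insert by auto
  then show ?case using insert mx by simp
qed

lemma lattice_SW:
  fixes K :: "'a::metric_space set" and L :: "('a \<Rightarrow> real) set"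
  assumes K: "compact K" "K \<noteq> {}" and f: "continuous_on K f" and e: "e > 0"
    and cont: "\<And>g. g \<in> L \<Longrightarrow> continuous_on K g"
    and mx: "\<And>g h. g\<in>L \<Longrightarrow> h\<in>L \<Longrightarrow> (\<lambda>x. max (g x) (h x)) \<in> L"
    and mn: "\<And>g h. g\<in>L \<Longrightarrow> h\<in>L \<Longrightarrow> (\<lambda>x. min (g x) (h x)) \<in> L"
    and interp: "\<And>x y. x\<in>K \<Longrightarrow> y\<in>K \<Longrightarrow> \<exists>g\<in>L. g x = f x \<and> g y = f y"
  shows "\<exists>h\<in>L. \<forall>x\<in>K. \<bar>f x - h x\<bar> < e"
proof -
  have stepA: "\<exists>h\<in>L. h x = f x \<and> (\<forall>z\<in>K. h z < f z + e)" if x: "x \<in> K" for x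
  proof -
    obtain G where G: "\<forall>y\<in>K. G y \<in> L \<and> G y x = f x \<and> G y y = f y"
      using interp[OF x] by metis
    have "\<exists>d>0. \<forall>z\<in>K. dist z y < d \<longrightarrow> G y z < f z + e" if y: "y \<in> K" for y
    proof -
      have "continuous_on K (\<lambda>z. G y z - f z)"
        using cont G y f by (intro continuous_intros) auto
      then obtain d where "d > 0" "\<forall>z\<in>K. dist z y < d \<longrightarrow> dist (G y z - f z) (G y y - f y) < e"
        using y e unfolding continuous_on_iff by metis
      then have "\<forall>z\<in>K. dist z y < d \<longrightarrow> G y z < f z + e" using G y by (auto simp: dist_real_def abs_less_iff)
      then show ?thesis using \<open>d > 0\<close> by blast
    qed
    then obtain D where D: "\<forall>y\<in>K. D y > 0 \<and> (\<forall>z\<in>K. dist z y < D y \<longrightarrow> G y z < f z + e)"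
      by metis
    have "K \<subseteq> (\<Union>y\<in>K. ball y (D y))" using D by force
    then obtain T where T: "T \<subseteq> K" "finite T" "K \<subseteq> (\<Union>y\<in>T. ball y (D y))"
      using compactE_image[OF K(1), of K "\<lambda>y. ball y (D y)"] by auto
    have Tne: "T \<noteq> {}" using T K(2) by auto
    define h where "h = (\<lambda>z. Min ((\<lambda>y. G y z) ` T))"
    have "h \<in> L" unfolding h_def
      by (rule finite_min_closed[OF T(2) Tne _ mn]) (use G T in auto)
    moreover have "h x = f x" unfolding h_def
    proof (rule Min_eqI)
      show "finite ((\<lambda>y. G y x) ` T)" using T by simp
      show "f x \<le> y" if "y \<in> (\<lambda>y. G y x) ` T" for y using that G T by auto
      obtain t where "t \<in> T" using Tne by auto
      then show "f x \<in> (\<lambda>y. G y x) ` T" using G T by (auto intro!: image_eqI[of _ _ t])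
    qed
    moreover have "h z < f z + e" if z: "z \<in> K" for z
    proof -
      obtain y where y: "y \<in> T" "z \<in> ball y (D y)" using T z by auto
      have "h z \<le> G y z" unfolding h_def using T y by auto
      also have "\<dots> < f z + e" using D y T z by (auto simp: dist_commute)
      finally show ?thesis .
    qed
    ultimately show ?thesis by blast
  qed
  then obtain H where H: "\<forall>x\<in>K. H x \<in> L \<and> H x x = f x \<and> (\<forall>z\<in>K. H x z < f z + e)"
    by metis
  have "\<exists>d>0. \<forall>z\<in>K. dist z x < d \<longrightarrow> H x z > f z - e" if x: "x \<in> K" for x
  proof -
    have "continuous_on K (\<lambda>z. H x z - f z)"
      using cont H x f by (intro continuous_intros) auto
    then obtain d where "d > 0" "\<forall>z\<in>K. dist z x < d \<longrightarrow> dist (H x z - f z) (H x x - f x) < e"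
      using x e unfolding continuous_on_iff by metis
    then have "\<forall>z\<in>K. dist z x < d \<longrightarrow> H x z > f z - e" using H x by (auto simp: dist_real_def abs_less_iff)
    then show ?thesis using \<open>d > 0\<close> by blast
  qed
  then obtain D where D: "\<forall>x\<in>K. D x > 0 \<and> (\<forall>z\<in>K. dist z x < D x \<longrightarrow> H x z > f z - e)"
    by metis
  have "K \<subseteq> (\<Union>y\<in>K. ball y (D y))" using D by force
  then obtain T where T: "T \<subseteq> K" "finite T" "K \<subseteq> (\<Union>y\<in>T. ball y (D y))"
    using compactE_image[OF K(1), of K "\<lambda>y. ball y (D y)"] by auto
  have Tne: "T \<noteq> {}" using T K(2) by auto
  define h where "h = (\<lambda>z. Max ((\<lambda>y. H y z) ` T))"
  have "h \<in> L" unfolding h_def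
    by (rule finite_max_closed[OF T(2) Tne _ mx]) (use H T in auto)
  moreover have "\<bar>f z - h z\<bar> < e" if z: "z \<in> K" for z
  proof -
    obtain y where y: "y \<in> T" "z \<in> ball y (D y)" using T z by auto
    have "f z - e < H y z" using D y T z by (auto simp: dist_commute)
    also have "H y z \<le> h z" unfolding h_def using T y by auto
    finally have 1: "f z - e < h z" .
    have "h z \<in> (\<lambda>y. H y z) ` T" unfolding h_def using T Tne by (intro Max_in) auto
    then obtain y' where "y' \<in> T" "h z = H y' z" by auto
    then have "h z < f z + e" using H T z by auto
    with 1 show ?thesis by linarith
  qed
  ultimately show ?thesis by blast
qed


definition maff :: "((real^'d) \<times> real) set \<Rightarrow> real^'d \<Rightarrow> real" where
  "maff F x = Max ((\<lambda>p. fst p \<bullet> x + snd p) ` F)"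

definition sumset :: "((real^'d) \<times> real) set \<Rightarrow> ((real^'d) \<times> real) set \<Rightarrow> ((real^'d) \<times> real) set" where
  "sumset F G = (\<lambda>(p,q). (fst p + fst q, snd p + snd q)) ` (F \<times> G)"

lemma sumset_fin: "finite F \<Longrightarrow> finite G \<Longrightarrow> finite (sumset F G)"
  by (simp add: sumset_def)

lemma sumset_ne: "F \<noteq> {} \<Longrightarrow> G \<noteq> {} \<Longrightarrow> sumset F G \<noteq> {}"
  by (simp add: sumset_def)

lemma maff_add:
  assumes "finite F" "F \<noteq> {}" "finite G" "G \<noteq> {}"
  shows "maff F x + maff G x = maff (sumset F G) x"
proof -
  let ?a = "\<lambda>p. fst p \<bullet> x + snd p"
  have "maff F x \<in> ?a ` F" unfolding maff_def using assms by (intro Max_in) auto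
  then obtain p where p: "p \<in> F" "maff F x = ?a p" by auto
  have "maff G x \<in> ?a ` G" unfolding maff_def using assms by (intro Max_in) auto
  then obtain q where q: "q \<in> G" "maff G x = ?a q" by auto
  have leF: "?a p' \<le> maff F x" if "p' \<in> F" for p' using that assms unfolding maff_def by auto
  have leG: "?a q' \<le> maff G x" if "q' \<in> G" for q' using that assms unfolding maff_def by auto
  show ?thesis unfolding maff_def[of "sumset F G"]
  proof (rule sym, rule Max_eqI)
    show "finite (?a ` sumset F G)" using assms by (simp add: sumset_fin)
    show "y \<le> maff F x + maff G x" if yin: "y \<in> ?a ` sumset F G" for y
    proof -
      obtain a b c d where "(a,b) \<in> F" "(c,d) \<in> G" "y = (a+c) \<bullet> x + (b+d)"
        using yin unfolding sumset_def by auto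
      moreover have "a \<bullet> x + b \<le> maff F x" "c \<bullet> x + d \<le> maff G x"
        using leF[of "(a,b)"] leG[of "(c,d)"] calculation by auto
      ultimately show ?thesis by (simp add: inner_add_left)
    qed
    show "maff F x + maff G x \<in> ?a ` sumset F G"
    proof -
      have "maff F x + maff G x = ?a (fst p + fst q, snd p + snd q)"
        using p q by (simp add: inner_add_left)
      moreover have "(fst p + fst q, snd p + snd q) \<in> sumset F G"
        using p q unfolding sumset_def by (auto intro!: image_eqI[of _ _ "(p,q)"])
      ultimately show ?thesis by blast
    qed
  qed
qed

lemma maff_max:
  assumes "finite F" "F \<noteq> {}" "finite G" "G \<noteq> {}"
  shows "max (maff F x) (maff G x) = maff (F \<union> G) x"
  unfolding maff_def using assms by (simp add: image_Un Max_Un)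

lemma maff_cont:
  assumes "finite F" "F \<noteq> {}"
  shows "continuous_on S (maff F)"
  using assms
proof (induction F rule: finite_ne_induct)
  case (singleton x) then show ?case unfolding maff_def by (simp add: continuous_intros)
next
  case (insert a F)
  have "maff (insert a F) = (\<lambda>x. max (fst a \<bullet> x + snd a) (maff F x))"
    using insert by (intro ext) (simp add: maff_def)
  then show ?case using insert by (auto intro!: continuous_intros)
qed


lemma select_max:
  fixes z :: "'i \<Rightarrow> real"
  assumes "finite I" "J \<subseteq> I" "J \<noteq> {}" "\<forall>i\<in>I. \<bar>z i\<bar> \<le> C"
  shows "dilation I z ((\<lambda>i. if i\<in>J then 0 else -(2*C+1)), -(C+1)) = Max (z ` J)"
proof -
  have fJ: "finite J" using assms finite_subset by blast
  have MJ: "Max (z ` J) \<in> z ` J" using fJ assms by (intro Max_in) auto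
  have ge: "z j \<le> Max (z ` J)" if "j \<in> J" for j using fJ that by auto
  obtain j0 where j0: "j0 \<in> J" using assms by auto
  have lb: "-C \<le> Max (z ` J)" using ge[OF j0] assms j0 by force
  show ?thesis unfolding dilation_def
  proof (rule Max_eqI)
    show "finite (insert (0 + snd ((\<lambda>i. if i \<in> J then 0 else - (2 * C + 1)), - (C + 1)))
       ((\<lambda>k. z k + fst ((\<lambda>i. if i \<in> J then 0 else - (2 * C + 1)), - (C + 1)) k) ` I))"
      using assms by simp
  next
    fix y assume "y \<in> insert (0 + snd ((\<lambda>i. if i \<in> J then 0 else - (2 * C + 1)), - (C + 1)))
       ((\<lambda>k. z k + fst ((\<lambda>i. if i \<in> J then 0 else - (2 * C + 1)), - (C + 1)) k) ` I)"
    then consider "y = -(C+1)" | i where "i \<in> J" "y = z i" | i where "i \<in> I" "i \<notin> J" "y = z i - (2*C+1)"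
      by (auto split: if_splits)
    then show "y \<le> Max (z ` J)"
    proof cases
      case 1 then show ?thesis using lb by simp
    next
      case 2 then show ?thesis using ge by simp
    next
      case 3
      then have "z i \<le> C" using assms by force
      then show ?thesis using 3 lb by simp
    qed
  next
    obtain j where "j \<in> J" "Max (z ` J) = z j" using MJ by auto
    then show "Max (z ` J) \<in> insert (0 + snd ((\<lambda>i. if i \<in> J then 0 else - (2 * C + 1)), - (C + 1)))
       ((\<lambda>k. z k + fst ((\<lambda>i. if i \<in> J then 0 else - (2 * C + 1)), - (C + 1)) k) ` I)"
      using assms by (auto intro!: image_eqI[of _ _ j])
  qed
qed


lemma realize:
  fixes F G :: "((real^'d) \<times> real) set" and K :: "(real^'d) set"
  assumes F: "finite F" "F \<noteq> {}" and G: "finite G" "G \<noteq> {}" and R: "\<forall>x\<in>K. norm x \<le> R"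
  shows "\<exists>m1 S1 q A1 c1 m2 S2 a2 c2. \<forall>x\<in>K.
     morphnet2 m1 (\<lambda>_. True) S1 q A1 c1 m2 (\<lambda>_. True) S2 a2 c2 x = maff F x - maff G x"
proof -
  define n where "n = CARD('d)"
  obtain gb where gb: "bij_betw gb {..<n} (UNIV::'d set)"
    using ex_bij_betw_nat_finite[of "UNIV::'d set"] by (auto simp: atLeast0LessThan n_def)
  define p where "p = card F"
  define r where "r = card G"
  obtain hF where hF: "bij_betw hF {..<p} F"
    using ex_bij_betw_nat_finite[OF F(1)] by (auto simp: atLeast0LessThan p_def)
  obtain hG where hG: "bij_betw hG {..<r} G"
    using ex_bij_betw_nat_finite[OF G(1)] by (auto simp: atLeast0LessThan r_def)
  have p0: "p > 0" using F by (simp add: p_def card_gt_0_iff)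
  have r0: "r > 0" using G by (simp add: r_def card_gt_0_iff)
  define q where "q = p + r"
  define H where "H i = (if i < p then hF i else hG (i - p))" for i
  define AW where "AW i = fst (H i)" for i
  define AC where "AC i = snd (H i)" for i
  define B where "B = max R 0"
  have B: "B \<ge> 0" "\<forall>x\<in>K. norm x \<le> B" using R by (auto simp: B_def)
  define C where "C = (\<Sum>i<q. norm (AW i) * B + \<bar>AC i\<bar>)"
  define S1 where "S1 j = ((\<lambda>k. if k \<in> {gb j} then 0 else -(2*B+1)), -(B+1))" for j
  define A1 where "A1 i j = AW i $ gb j" for i j
  define J1 where "J1 = {..<p}"
  define J2 where "J2 = {p..<q}"
  define S2 where "S2 j = (if j = (0::nat) then ((\<lambda>i. if i \<in> J1 then 0 else -(2*C+1)), -(C+1))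
      else ((\<lambda>i. if i \<in> J2 then 0 else -(2*C+1)), -(C+1)))" for j
  define a2 where "a2 j = (if j = (0::nat) then 1 else (-1::real))" for j
  have "\<forall>x\<in>K. morphnet2 n (\<lambda>_. True) S1 q A1 AC 2 (\<lambda>_. True) S2 a2 0 x = maff F x - maff G x"
  proof
    fix x assume x: "x \<in> K"
    have h1: "de_neuron UNIV (\<lambda>i. x $ i) True (S1 j) = x $ gb j" for j
    proof -
      have "de_neuron UNIV (\<lambda>i. x $ i) True (S1 j) = Max ((\<lambda>i. x $ i) ` {gb j})"
        unfolding de_neuron_def S1_def if_True
        by (rule select_max) (use B x in \<open>auto intro: order_trans[OF component_le_norm_cart]\<close>)
      then show ?thesis by simp
    qed
    define z where "z i = AW i \<bullet> x + AC i" for i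
    have zeq: "(\<Sum>j<n. A1 i j * de_neuron UNIV (\<lambda>i. x $ i) True (S1 j)) + AC i = z i" for i
    proof -
      have "(\<Sum>j<n. A1 i j * de_neuron UNIV (\<lambda>i. x $ i) True (S1 j))
          = (\<Sum>j<n. (\<lambda>k. AW i $ k * x $ k) (gb j))"
        by (simp add: h1 A1_def)
      also have "\<dots> = (\<Sum>k\<in>UNIV. AW i $ k * x $ k)"
        by (rule sum.reindex_bij_betw[OF gb])
      also have "\<dots> = AW i \<bullet> x" by (simp add: inner_vec_def)
      finally show ?thesis by (simp add: z_def)
    qed
    have zb: "\<forall>i\<in>{..<q}. \<bar>z i\<bar> \<le> C"
    proof
      fix i assume i: "i \<in> {..<q}"
      have "\<bar>z i\<bar> \<le> \<bar>AW i \<bullet> x\<bar> + \<bar>AC i\<bar>" by (simp add: z_def abs_triangle_ineq)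
      also have "\<bar>AW i \<bullet> x\<bar> \<le> norm (AW i) * norm x" by (rule Cauchy_Schwarz_ineq2)
      also have "norm (AW i) * norm x \<le> norm (AW i) * B" using B x by (simp add: mult_left_mono)
      also have "norm (AW i) * B + \<bar>AC i\<bar> \<le> C" unfolding C_def
        using i B by (intro member_le_sum[of i _ "\<lambda>i. norm (AW i) * B + \<bar>AC i\<bar>"]) auto
      finally show "\<bar>z i\<bar> \<le> C" by simp
    qed
    have zF: "z ` J1 = (\<lambda>a. fst a \<bullet> x + snd a) ` F"
    proof -
      have "z ` J1 = (\<lambda>a. fst a \<bullet> x + snd a) ` (hF ` {..<p})"
        unfolding J1_def z_def AW_def AC_def H_def by (auto simp: image_iff)
      then show ?thesis using hF by (simp add: bij_betw_def)
    qed
    have zG: "z ` J2 = (\<lambda>a. fst a \<bullet> x + snd a) ` G"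
    proof -
      have "{p..<q} = (\<lambda>j. j + p) ` {..<r}"
      proof (rule set_eqI, rule iffI)
        fix i assume "i \<in> {p..<q}"
        then show "i \<in> (\<lambda>j. j + p) ` {..<r}" unfolding q_def
          by (intro image_eqI[of _ _ "i - p"]) auto
      qed (auto simp: q_def)
      then have "z ` J2 = (\<lambda>a. fst a \<bullet> x + snd a) ` (hG ` {..<r})"
        unfolding J2_def z_def AW_def AC_def H_def by (auto simp: image_iff)
      then show ?thesis using hG by (simp add: bij_betw_def)
    qed
    have S20: "S2 0 = ((\<lambda>i. if i \<in> J1 then 0 else -(2*C+1)), -(C+1))" by (simp add: S2_def)
    have S21: "S2 1 = ((\<lambda>i. if i \<in> J2 then 0 else -(2*C+1)), -(C+1))" by (simp add: S2_def)
    have u: "de_neuron {..<q} z True (S2 0) = maff F x"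
      unfolding de_neuron_def S20 maff_def zF[symmetric] if_True
      by (rule select_max) (use zb p0 in \<open>auto simp: J1_def q_def\<close>)
    have v: "de_neuron {..<q} z True (S2 1) = maff G x"
      unfolding de_neuron_def S21 maff_def zG[symmetric] if_True
      by (rule select_max) (use zb r0 in \<open>auto simp: J2_def q_def\<close>)
    have zfun: "(\<lambda>i. (\<Sum>j<n. A1 i j * de_neuron UNIV (\<lambda>i. x $ i) True (S1 j)) + AC i) = z"
      using zeq by auto
    show "morphnet2 n (\<lambda>_. True) S1 q A1 AC 2 (\<lambda>_. True) S2 a2 0 x = maff F x - maff G x"
      unfolding morphnet2_def Let_def zfun
      using u v by (simp add: numeral_2_eq_2 a2_def)
  qed
  then show ?thesis by blast
qed


theorem mainTheorem4:
  fixes K :: "(real ^ 'd) set" and f :: "real ^ 'd \<Rightarrow> real" and \<epsilon> :: real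
  assumes "compact K" and "continuous_on K f" and "\<epsilon> > 0"
  shows "\<exists>N. is_morphnet2 N \<and> is_dilation_morphnet2 N \<and>
           (SUP x\<in>K. ereal \<bar>f x - N x\<bar>) < ereal \<epsilon>"
proof (cases "K = {}")
  case True
  define N :: "real ^ 'd \<Rightarrow> real" where "N = morphnet2 0 (\<lambda>_. True) (\<lambda>_. (\<lambda>_. 0, 0)) 0 (\<lambda>_ _. 0) (\<lambda>_. 0)
      0 (\<lambda>_. True) (\<lambda>_. (\<lambda>_. 0, 0)) (\<lambda>_. 0) 0"
  have "is_morphnet2 N" unfolding is_morphnet2_def N_def by blast
  moreover have "is_dilation_morphnet2 N" unfolding is_dilation_morphnet2_def N_def by blast
  moreover have "(SUP x\<in>K. ereal \<bar>f x - N x\<bar>) < ereal \<epsilon>" using True by (simp add: bot_ereal_def)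
  ultimately show ?thesis by blast
next
  case False
  define L :: "(real^'d \<Rightarrow> real) set" where
    "L = {(\<lambda>x. maff F x - maff G x) | F G. finite F \<and> F \<noteq> {} \<and> finite G \<and> G \<noteq> {}}"
  have Lmem: "(\<lambda>x. maff F x - maff G x) \<in> L" if "finite F" "F \<noteq> {}" "finite G" "G \<noteq> {}" for F G
    unfolding L_def using that by blast
  have "\<exists>h\<in>L. \<forall>x\<in>K. \<bar>f x - h x\<bar> < \<epsilon>/2"
  proof (rule lattice_SW[OF assms(1) False assms(2)])
    show "\<epsilon>/2 > 0" using assms by simp
  next
    fix g assume "g \<in> L"
    then obtain F G where FG: "finite F" "F \<noteq> {}" "finite G" "G \<noteq> {}" "g = (\<lambda>x. maff F x - maff G x)"
      unfolding L_def by blast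
    show "continuous_on K g" unfolding FG(5)
      by (intro continuous_intros maff_cont FG(1-4))
  next
    fix g h assume "g \<in> L" "h \<in> L"
    then obtain F1 G1 F2 G2 where FG: "finite F1" "F1 \<noteq> {}" "finite G1" "G1 \<noteq> {}" "g = (\<lambda>x. maff F1 x - maff G1 x)"
      "finite F2" "F2 \<noteq> {}" "finite G2" "G2 \<noteq> {}" "h = (\<lambda>x. maff F2 x - maff G2 x)"
      unfolding L_def by blast
    have eqmax: "(\<lambda>x. max (g x) (h x)) = (\<lambda>x. maff (sumset F1 G2 \<union> sumset F2 G1) x - maff (sumset G1 G2) x)"
    proof
      fix x
      have "max (g x) (h x) = max (maff F1 x + maff G2 x) (maff F2 x + maff G1 x) - (maff G1 x + maff G2 x)"
        unfolding FG(5,10) by (simp add: max_def)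
      also have "\<dots> = maff (sumset F1 G2 \<union> sumset F2 G1) x - maff (sumset G1 G2) x"
        using FG by (simp add: maff_add maff_max sumset_fin sumset_ne)
      finally show "max (g x) (h x) = \<dots>" .
    qed
    show "(\<lambda>x. max (g x) (h x)) \<in> L" unfolding eqmax
      by (rule Lmem) (use FG in \<open>auto simp: sumset_fin sumset_ne\<close>)
    have eqmin: "(\<lambda>x. min (g x) (h x)) = (\<lambda>x. maff (sumset F1 F2) x - maff (sumset G1 F2 \<union> sumset G2 F1) x)"
    proof
      fix x
      have "min (g x) (h x) = (maff F1 x + maff F2 x) - max (maff G1 x + maff F2 x) (maff G2 x + maff F1 x)"
        unfolding FG(5,10) by (simp add: max_def min_def)
      also have "\<dots> = maff (sumset F1 F2) x - maff (sumset G1 F2 \<union> sumset G2 F1) x"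
        using FG by (simp add: maff_add maff_max sumset_fin sumset_ne)
      finally show "min (g x) (h x) = \<dots>" .
    qed
    show "(\<lambda>x. min (g x) (h x)) \<in> L" unfolding eqmin
      by (rule Lmem) (use FG in \<open>auto simp: sumset_fin sumset_ne\<close>)
  next
    fix x y assume "x \<in> K" "y \<in> K"
    define w where "w = ((f y - f x) / ((y - x) \<bullet> (y - x))) *\<^sub>R (y - x)"
    define c where "c = f x - w \<bullet> x"
    define g where "g = (\<lambda>z. maff {(w, c)} z - maff {(0, 0)} z)"
    have g: "g z = w \<bullet> z + c" for z by (simp add: g_def maff_def)
    have "g \<in> L" unfolding L_def g_def by blast
    moreover have "g x = f x" by (simp add: g c_def)
    moreover have "g y = f y"
    proof (cases "x = y")
      case True then show ?thesis by (simp add: g c_def)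
    next
      case False
      then have "(y - x) \<bullet> (y - x) \<noteq> 0" by simp
      then have "w \<bullet> (y - x) = f y - f x" by (simp add: w_def)
      then show ?thesis by (simp add: g c_def inner_diff_right)
    qed
    ultimately show "\<exists>g\<in>L. g x = f x \<and> g y = f y" by blast
  qed
  then obtain h where h: "h \<in> L" "\<forall>x\<in>K. \<bar>f x - h x\<bar> < \<epsilon>/2" by blast
  then obtain F G where FG: "finite F" "F \<noteq> {}" "finite G" "G \<noteq> {}" "h = (\<lambda>x. maff F x - maff G x)"
    unfolding L_def by blast
  obtain R where R: "\<forall>x\<in>K. norm x \<le> R"
    using compact_imp_bounded[OF assms(1)] bounded_pos by blast
  obtain m1 S1 q A1 c1 m2 S2 a2 c2 where net: "\<forall>x\<in>K.
     morphnet2 m1 (\<lambda>_. True) S1 q A1 c1 m2 (\<lambda>_. True) S2 a2 c2 x = maff F x - maff G x"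
    using realize[OF FG(1-4) R] by blast
  define N where "N = morphnet2 m1 (\<lambda>_. True) S1 q A1 c1 m2 (\<lambda>_. True) S2 a2 c2"
  have "is_morphnet2 N" unfolding is_morphnet2_def N_def by blast
  moreover have "is_dilation_morphnet2 N" unfolding is_dilation_morphnet2_def N_def by blast
  moreover have "(SUP x\<in>K. ereal \<bar>f x - N x\<bar>) < ereal \<epsilon>"
  proof -
    have "(SUP x\<in>K. ereal \<bar>f x - N x\<bar>) \<le> ereal (\<epsilon>/2)"
    proof (rule SUP_least)
      fix x assume "x \<in> K"
      then have "N x = h x" using net FG(5) by (simp add: N_def)
      then show "ereal \<bar>f x - N x\<bar> \<le> ereal (\<epsilon>/2)" using h \<open>x \<in> K\<close> by (simp add: less_imp_le)
    qed
    also have "\<dots> < ereal \<epsilon>" using assms(3) by simp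
    finally show ?thesis .
  qed
  ultimately show ?thesis by blast
qed

end
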